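(* Let $k \geq 2$ and let $G_k=(V_k,E_k)$ be the bipartite graph with vertex set $V_k=\{x,y\}\cup \{u_i,v_i \mid 1\leq i\leq 2k-2\}$ and edge set $E_k=\{\{x,y\}\}\cup\{\{x,u_{2j-1}\},\{x,v_{2j-1}\} \mid 1 \leq j\leq k-1\}$. Let $G$ be a graph that contains $G_k$ as an induced subgraph, and let $t$ be the minimum integer for which $G$ is a $t$-interval-PCG, i.e. $G=t\textnormal{-}PCG(T,I_1,\ldots, I_t)$ for some edge-weighted tree $T$ and disjoint intervals $I_1,\ldots,I_t$. For $1\leq i\leq 2k-2$, write $[u_i,v_i]$ for the vertex set $\{u_i, u_{i+1}, \ldots, u_{2k-2}, y, v_{2k-2}, v_{2k-3},\ldots, v_i\}$. If for each $i$, $1\leq i\leq 2k-2$, the path $P_T(u_i,v_i)$ is the longest path in $T_{[u_i,v_i]}$, then $t\geq k$.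
   Context: All trees are unrooted with edges weighted by nonnegative reals. For leaves $u,v$ of a tree $T$, $P_T(u,v)$ is the unique path between them and $d_T(u,v)$ the sum of its edge weights; for a set $L$ of leaves, $T_L$ is the minimal subtree of $T$ containing $L$. Given a tree $T$ and $k\ge1$ disjoint intervals $I_1,\ldots,I_k$ of nonnegative reals, $k\textnormal{-}PCG(T,I_1,\ldots,I_k)$ (a $k$-interval-PCG, or multi-interval PCG) is the graph whose vertex set is the leaf set of $T$ and in which $\{u,v\}$ is an edge iff $d_T(u,v)\in I_i$ for some $i$, $1\le i\le k$. *)

theory Defs
  imports Main Complex_Main
begin

definition is_path :: "'a set set \<Rightarrow> 'a list \<Rightarrow> bool" where
  "is_path E p \<longleftrightarrow> p \<noteq> [] \<and> distinct p \<and>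
     (\<forall>i. Suc i < length p \<longrightarrow> {p ! i, p ! Suc i} \<in> E)"

definition is_tree :: "'a set \<Rightarrow> 'a set set \<Rightarrow> bool" where
  "is_tree V E \<longleftrightarrow> finite V \<and> V \<noteq> {} \<and>
     (\<forall>e\<in>E. \<exists>u v. u \<noteq> v \<and> u \<in> V \<and> v \<in> V \<and> e = {u, v}) \<and>
     (\<forall>u\<in>V. \<forall>v\<in>V. \<exists>!p. is_path E p \<and> hd p = u \<and> last p = v)"

definition leaves :: "'a set \<Rightarrow> 'a set set \<Rightarrow> 'a set" where
  "leaves V E = {v \<in> V. card {e \<in> E. v \<in> e} = 1}"

definition path_weight :: "('a set \<Rightarrow> real) \<Rightarrow> 'a list \<Rightarrow> real" where
  "path_weight w p = (\<Sum>i\<leftarrow>[0..<length p - 1]. w {p ! i, p ! Suc i})"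

definition tpath :: "'a set set \<Rightarrow> 'a \<Rightarrow> 'a \<Rightarrow> 'a list" where
  "tpath E u v = (THE p. is_path E p \<and> hd p = u \<and> last p = v)"

definition tdist :: "'a set set \<Rightarrow> ('a set \<Rightarrow> real) \<Rightarrow> 'a \<Rightarrow> 'a \<Rightarrow> real" where
  "tdist E w u v = path_weight w (tpath E u v)"

text \<open>Vertex set of the minimal subtree T_L containing the leaf set L.\<close>
definition span_vertices :: "'a set set \<Rightarrow> 'a set \<Rightarrow> 'a set" where
  "span_vertices E L = (\<Union>a\<in>L. \<Union>b\<in>L. set (tpath E a b))"

definition valid_intervals :: "(nat \<Rightarrow> real set) \<Rightarrow> nat \<Rightarrow> bool" where
  "valid_intervals I t \<longleftrightarrow>
     (\<forall>i<t. I i \<noteq> {} \<and> I i \<subseteq> {0..} \<and>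
        (\<forall>a\<in>I i. \<forall>c\<in>I i. \<forall>b. a \<le> b \<and> b \<le> c \<longrightarrow> b \<in> I i)) \<and>
     (\<forall>i<t. \<forall>j<t. i \<noteq> j \<longrightarrow> I i \<inter> I j = {})"

definition pcg_edges :: "'a set \<Rightarrow> 'a set set \<Rightarrow> ('a set \<Rightarrow> real) \<Rightarrow> (nat \<Rightarrow> real set) \<Rightarrow> nat \<Rightarrow> 'a set set" where
  "pcg_edges V E w I t = {{u, v} | u v. u \<in> leaves V E \<and> v \<in> leaves V E \<and> u \<noteq> v \<and>
       (\<exists>i<t. tdist E w u v \<in> I i)}"

definition is_multi_PCG_rep :: "'a set \<Rightarrow> 'a set set \<Rightarrow> nat \<Rightarrow> 'a set \<Rightarrow> 'a set set \<Rightarrow> ('a set \<Rightarrow> real) \<Rightarrow> (nat \<Rightarrow> real set) \<Rightarrow> bool" where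
  "is_multi_PCG_rep VG EG t V E w I \<longleftrightarrow> t \<ge> 1 \<and> is_tree V E \<and> (\<forall>e\<in>E. w e \<ge> 0) \<and>
     valid_intervals I t \<and> VG = leaves V E \<and> EG = pcg_edges V E w I t"

definition is_multi_PCG :: "'a set \<Rightarrow> 'a set set \<Rightarrow> nat \<Rightarrow> bool" where
  "is_multi_PCG VG EG t \<longleftrightarrow> (\<exists>V E w I. is_multi_PCG_rep VG EG t V E w I)"

datatype gk_vertex = X | Y | U nat | W nat  \<comment> \<open>W i stands for v_i\<close>

definition Gk_verts :: "nat \<Rightarrow> gk_vertex set" where
  "Gk_verts k = {X, Y} \<union> U ` {1..2*k-2} \<union> W ` {1..2*k-2}"

definition Gk_edges :: "nat \<Rightarrow> gk_vertex set set" where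
  "Gk_edges k = {{X, Y}} \<union> {{X, U (2*j-1)} | j. 1 \<le> j \<and> j \<le> k-1}
                         \<union> {{X, W (2*j-1)} | j. 1 \<le> j \<and> j \<le> k-1}"

definition induced_embedding :: "nat \<Rightarrow> 'a set \<Rightarrow> 'a set set \<Rightarrow> (gk_vertex \<Rightarrow> 'a) \<Rightarrow> bool" where
  "induced_embedding k VG EG f \<longleftrightarrow> inj_on f (Gk_verts k) \<and> f ` Gk_verts k \<subseteq> VG \<and>
     (\<forall>a\<in>Gk_verts k. \<forall>b\<in>Gk_verts k. ({f a, f b} \<in> EG \<longleftrightarrow> {a, b} \<in> Gk_edges k))"

definition seg :: "nat \<Rightarrow> nat \<Rightarrow> gk_vertex set" where
  "seg k i = {Y} \<union> U ` {i..2*k-2} \<union> W ` {i..2*k-2}"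

end

theory Submission
  imports Defs
begin


lemma is_path_succ: "is_path E p \<longleftrightarrow> p \<noteq> [] \<and> distinct p \<and> successively (\<lambda>a b. {a,b} \<in> E) p"
  unfolding is_path_def successively_conv_nth by blast

fun pw :: "('a set \<Rightarrow> real) \<Rightarrow> 'a list \<Rightarrow> real" where
  "pw w (a # b # xs) = w {a,b} + pw w (b # xs)"
| "pw w _ = 0"

lemma path_weight_pw: "path_weight w p = pw w p"
proof (induction w p rule: pw.induct)
  case (1 w a b xs)
  have "path_weight w (a # b # xs) = (\<Sum>i\<leftarrow>[0..<Suc (length xs)]. w {(a#b#xs) ! i, (a#b#xs) ! Suc i})"
    by (simp add: path_weight_def)
  also have "[0..<Suc (length xs)] = 0 # map Suc [0..<length xs]"
    by (metis map_Suc_upt upt_conv_Cons zero_less_Suc)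
  also have "(\<Sum>i\<leftarrow>0 # map Suc [0..<length xs]. w {(a#b#xs) ! i, (a#b#xs) ! Suc i})
     = w {a,b} + (\<Sum>i\<leftarrow>[0..<length xs]. w {(b#xs) ! i, (b#xs) ! Suc i})"
    by (simp add: comp_def)
  also have "(\<Sum>i\<leftarrow>[0..<length xs]. w {(b#xs) ! i, (b#xs) ! Suc i}) = path_weight w (b # xs)"
    by (simp add: path_weight_def)
  finally show ?case using 1 by simp
qed (simp_all add: path_weight_def)

lemma pw_append: "pw w (xs @ m # ys) = pw w (xs @ [m]) + pw w (m # ys)"
  by (induction xs rule: induct_list012) auto

lemma pw_rev: "pw w (rev xs) = pw w xs"
proof (induction w xs rule: pw.induct)
  case (1 w a b xs)
  have "pw w (rev (a # b # xs)) = pw w (rev xs @ [b]) + pw w [b, a]"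
    using pw_append[of w "rev xs" b "[a]"] by simp
  then show ?case using 1 by (simp add: insert_commute)
qed auto

lemma pw_nonneg: "\<forall>e\<in>E. w e \<ge> 0 \<Longrightarrow> successively (\<lambda>a b. {a,b} \<in> E) p \<Longrightarrow> pw w p \<ge> 0"
  by (induction w p rule: pw.induct) auto

lemma lcp_exists: "\<exists>pre p' q'. p = pre @ p' \<and> q = pre @ q' \<and> (p' \<noteq> [] \<longrightarrow> q' \<noteq> [] \<longrightarrow> hd p' \<noteq> hd q')"
proof (induction p arbitrary: q)
  case Nil
  then show ?case by (intro exI[of _ "[]"] exI[of _ "[]"] exI[of _ q]) auto
next
  case (Cons a p)
  show ?case
  proof (cases "q \<noteq> [] \<and> hd q = a")
    case True
    then obtain q1 where q: "q = a # q1" by (cases q) auto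
    from Cons.IH[of q1] obtain pre p' q' where "p = pre @ p'" "q1 = pre @ q'"
      "(p' \<noteq> [] \<longrightarrow> q' \<noteq> [] \<longrightarrow> hd p' \<noteq> hd q')" by blast
    then show ?thesis using q by (intro exI[of _ "a # pre"] exI[of _ p'] exI[of _ q']) auto
  next
    case False
    then show ?thesis by (intro exI[of _ "[]"] exI[of _ "a # p"] exI[of _ q]) auto
  qed
qed

lemma is_path_appendD:
  assumes "is_path E (xs @ ys)"
  shows "xs \<noteq> [] \<Longrightarrow> is_path E xs" "ys \<noteq> [] \<Longrightarrow> is_path E ys"
  using assms by (auto simp: is_path_succ successively_append_iff)

locale tr =
  fixes V :: "'a set" and E :: "'a set set" and w :: "'a set \<Rightarrow> real"
  assumes tree: "is_tree V E" and wpos: "\<forall>e\<in>E. w e \<ge> 0"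
begin

lemma uniq_paths:
  assumes "u \<in> V" "v \<in> V" shows "\<exists>!p. is_path E p \<and> hd p = u \<and> last p = v"
proof -
  have all: "\<forall>u\<in>V. \<forall>v\<in>V. \<exists>!p. is_path E p \<and> hd p = u \<and> last p = v"
    using tree unfolding is_tree_def by (elim conjE)
  from all assms(1) have "\<forall>v\<in>V. \<exists>!p. is_path E p \<and> hd p = u \<and> last p = v" by (rule bspec)
  then show ?thesis using assms(2) by (rule bspec)
qed

lemma edge_in: "{a, b} \<in> E \<Longrightarrow> b \<in> V"
  using tree unfolding is_tree_def by (metis doubleton_eq_iff)

lemma succ_set: "successively (\<lambda>a b. {a,b} \<in> E) p \<Longrightarrow> hd p \<in> V \<Longrightarrow> set p \<subseteq> V"
  by (induction p rule: induct_list012) (auto dest: edge_in)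

lemma path_set: "is_path E p \<Longrightarrow> hd p \<in> V \<Longrightarrow> set p \<subseteq> V"
  using succ_set is_path_succ by blast

lemma tpath_ok:
  assumes "u \<in> V" "v \<in> V"
  shows "is_path E (tpath E u v) \<and> hd (tpath E u v) = u \<and> last (tpath E u v) = v"
proof -
  have "\<exists>!p. is_path E p \<and> hd p = u \<and> last p = v" using uniq_paths assms by simp
  then show ?thesis unfolding tpath_def by (rule theI')
qed

lemma tpath_uniq:
  assumes "u \<in> V" "is_path E p" "hd p = u" "last p = v"
  shows "tpath E u v = p"
proof -
  have "v \<in> V" using path_set[OF assms(2)] assms by (metis last_in_set is_path_def subsetD)
  then have "\<exists>!p. is_path E p \<and> hd p = u \<and> last p = v" using uniq_paths assms by simp
  then show ?thesis unfolding tpath_def using assms by (intro the1_equality) auto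
qed

lemma tpath_ne: "u \<in> V \<Longrightarrow> v \<in> V \<Longrightarrow> tpath E u v \<noteq> []"
  using tpath_ok is_path_def by blast

lemma tpath_set: "u \<in> V \<Longrightarrow> v \<in> V \<Longrightarrow> set (tpath E u v) \<subseteq> V"
  using tpath_ok path_set by metis

lemma tdist_pw: "tdist E w u v = pw w (tpath E u v)"
  by (simp add: tdist_def path_weight_pw)

lemma tdist_nonneg: "u \<in> V \<Longrightarrow> v \<in> V \<Longrightarrow> tdist E w u v \<ge> 0"
proof -
  assume "u \<in> V" "v \<in> V"
  then have "successively (\<lambda>a b. {a,b} \<in> E) (tpath E u v)" using tpath_ok is_path_succ by blast
  then show ?thesis unfolding tdist_pw using wpos pw_nonneg by blast
qed

lemma tpath_rev: "u \<in> V \<Longrightarrow> v \<in> V \<Longrightarrow> tpath E v u = rev (tpath E u v)"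
proof -
  assume uv: "u \<in> V" "v \<in> V"
  have ok: "is_path E (tpath E u v)" "hd (tpath E u v) = u" "last (tpath E u v) = v" using tpath_ok uv by auto
  have sym: "(\<lambda>x y. {y, x} \<in> E) = (\<lambda>x y. {x, y} \<in> E)" by (simp add: insert_commute)
  have "is_path E (rev (tpath E u v))" using ok(1) unfolding is_path_succ successively_rev sym by simp
  moreover have "hd (rev (tpath E u v)) = v" "last (rev (tpath E u v)) = u"
    using ok is_path_def by (auto simp: hd_rev last_rev)
  ultimately show ?thesis using uv by (intro tpath_uniq) auto
qed

lemma tdist_sym: "u \<in> V \<Longrightarrow> v \<in> V \<Longrightarrow> tdist E w v u = tdist E w u v"
  unfolding tdist_pw by (subst tpath_rev) (simp_all add: pw_rev)

lemma split_path:
  assumes "u \<in> V" "v \<in> V" "tpath E u v = xs @ m # ys"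
  shows "m \<in> V" "tpath E u m = xs @ [m]" "tpath E m v = m # ys"
    "tdist E w u v = tdist E w u m + tdist E w m v"
proof -
  have ok: "is_path E (xs @ m # ys)" "hd (xs @ m # ys) = u" "last (xs @ m # ys) = v"
    using tpath_ok[OF assms(1,2)] assms(3) by auto
  show mV: "m \<in> V" using tpath_set[OF assms(1,2)] assms(3) by auto
  have p1: "is_path E (xs @ [m])" using ok(1) is_path_appendD[of E "xs @ [m]" ys] by simp
  have p2: "is_path E (m # ys)" using ok(1) is_path_appendD[of E xs "m # ys"] by simp
  show t1: "tpath E u m = xs @ [m]" using ok p1 assms(1) by (intro tpath_uniq) (auto simp: hd_append)
  show t2: "tpath E m v = m # ys" using ok p2 mV by (intro tpath_uniq) auto
  show "tdist E w u v = tdist E w u m + tdist E w m v"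
    unfolding tdist_pw t1 t2 assms(3) by (rule pw_append)
qed

lemma add_path:
  assumes "u \<in> V" "v \<in> V" "m \<in> set (tpath E u v)"
  shows "tdist E w u v = tdist E w u m + tdist E w m v"
proof -
  obtain xs ys where "tpath E u v = xs @ m # ys" using assms(3) split_list by metis
  then show ?thesis using split_path(4)[OF assms(1,2)] by blast
qed

lemma mem_V: "u \<in> V \<Longrightarrow> v \<in> V \<Longrightarrow> m \<in> set (tpath E u v) \<Longrightarrow> m \<in> V"
  using tpath_set by blast


lemma order_path:
  assumes "u \<in> V" "v \<in> V" "c \<in> set (tpath E u v)" "c' \<in> set (tpath E u v)"
  shows "(c \<in> set (tpath E u c') \<and> c' \<in> set (tpath E c v)) \<or>
         (c' \<in> set (tpath E u c) \<and> c \<in> set (tpath E c' v))"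
proof -
  define r where "r = tpath E u v"
  obtain i where i: "i < length r" "c = r ! i" using assms(3) unfolding r_def by (metis in_set_conv_nth)
  obtain j where j: "j < length r" "c' = r ! j" using assms(4) unfolding r_def by (metis in_set_conv_nth)
  have gen: "r ! a \<in> set (tpath E u (r ! b)) \<and> r ! b \<in> set (tpath E (r ! a) v)"
    if ab: "a \<le> b" "b < length r" for a b
  proof -
    have ra: "r = take a r @ r ! a # drop (Suc a) r" using ab by (simp add: id_take_nth_drop)
    have rb: "r = take b r @ r ! b # drop (Suc b) r" using ab by (simp add: id_take_nth_drop)
    have "tpath E u (r ! b) = take b r @ [r ! b]" using split_path(2)[OF assms(1,2)] rb r_def by metis
    moreover have "r ! a \<in> set (take b r @ [r ! b])"
    proof (cases "a = b")
      case False
      then have "take b r ! a = r ! a" "a < length (take b r)" using ab by auto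
      then show ?thesis by (metis in_set_conv_nth Un_iff set_append)
    qed simp
    moreover have "tpath E (r ! a) v = r ! a # drop (Suc a) r" using split_path(3)[OF assms(1,2)] ra r_def by metis
    moreover have "r ! b \<in> set (r ! a # drop (Suc a) r)"
    proof (cases "a = b")
      case False
      then have "drop (Suc a) r ! (b - Suc a) = r ! b" "b - Suc a < length (drop (Suc a) r)" using ab by auto
      then show ?thesis by (metis list.set_intros(2) nth_mem)
    qed simp
    ultimately show ?thesis by simp
  qed
  show ?thesis
  proof (cases "i \<le> j")
    case True then show ?thesis using gen[of i j] i j by simp
  next
    case False then show ?thesis using gen[of j i] i j by simp
  qed
qed

lemma median:
  assumes aV: "a \<in> V" and bV: "b \<in> V" and cV: "c \<in> V"
  shows "\<exists>m \<in> set (tpath E a b). tdist E w c a = tdist E w c m + tdist E w m a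
           \<and> tdist E w c b = tdist E w c m + tdist E w m b"
proof -
  define p where "p = tpath E c a"
  define q where "q = tpath E c b"
  obtain pre p' q' where pq: "p = pre @ p'" "q = pre @ q'" and dif: "p' \<noteq> [] \<longrightarrow> q' \<noteq> [] \<longrightarrow> hd p' \<noteq> hd q'"
    using lcp_exists by blast
  have pok: "is_path E p" "hd p = c" "last p = a" using tpath_ok[OF cV aV] p_def by auto
  have qok: "is_path E q" "hd q = c" "last q = b" using tpath_ok[OF cV bV] q_def by auto
  have "pre \<noteq> []"
  proof
    assume "pre = []"
    then have "p' = p" "q' = q" using pq by auto
    then show False using dif pok qok is_path_def by metis
  qed
  then obtain pre0 m where pre: "pre = pre0 @ [m]" by (metis rev_exhaust)
  have p_eq: "tpath E c a = pre0 @ m # p'" using pq pre p_def by simp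
  have q_eq: "tpath E c b = pre0 @ m # q'" using pq pre q_def by simp
  note sp = split_path[OF cV aV p_eq]
  note sq = split_path[OF cV bV q_eq]
  have mV: "m \<in> V" using sp by simp
  have pm: "is_path E (m # p')" "last (m # p') = a" using tpath_ok[OF mV aV] sp by auto
  have qm: "is_path E (m # q')" "last (m # q') = b" using tpath_ok[OF mV bV] sq by auto
  have disj: "set p' \<inter> set q' = {}"
  proof (rule ccontr)
    assume "set p' \<inter> set q' \<noteq> {}"
    then obtain z where z: "z \<in> set p'" "z \<in> set q'" by blast
    obtain p1 p2 where p1: "p' = p1 @ z # p2" using z split_list by metis
    obtain q1 q2 where q1: "q' = q1 @ z # q2" using z split_list by metis
    have "tpath E c z = (pre0 @ m # p1) @ [z]"
      using split_path(2)[OF cV aV, of "pre0 @ m # p1" z p2] p_eq p1 by simp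
    moreover have "tpath E c z = (pre0 @ m # q1) @ [z]"
      using split_path(2)[OF cV bV, of "pre0 @ m # q1" z q2] q_eq q1 by simp
    ultimately have "p1 = q1" by simp
    then have "hd p' = hd q'" using p1 q1 by (cases p1) auto
    then show False using dif p1 q1 by simp
  qed
  define r where "r = rev p' @ m # q'"
  have "is_path E r"
  proof -
    have d: "distinct (m # p')" "distinct (m # q')" using pm qm is_path_def by blast+
    have s1: "successively (\<lambda>a b. {a,b} \<in> E) (m # p')" "successively (\<lambda>a b. {a,b} \<in> E) (m # q')"
      using pm qm is_path_succ by blast+
    have "successively (\<lambda>a b. {a,b} \<in> E) (rev (m # p'))"
    proof -
      have sym: "(\<lambda>x y. {y, x} \<in> E) = (\<lambda>x y. {x, y} \<in> E)" by (simp add: insert_commute)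
      show ?thesis using s1(1) unfolding successively_rev sym .
    qed
    then have "successively (\<lambda>a b. {a,b} \<in> E) (rev p' @ [m] @ q')"
      using s1(2) by (subst append_assoc[symmetric], subst successively_append_iff) (auto simp: successively_Cons)
    moreover have "distinct r" using d disj unfolding r_def by auto
    ultimately show ?thesis unfolding r_def is_path_succ by simp
  qed
  moreover have "hd r = a" using pm unfolding r_def by (cases p') (auto simp: hd_append hd_rev)
  moreover have "last r = b" using qm unfolding r_def by (cases q') auto
  ultimately have "tpath E a b = r" using aV by (intro tpath_uniq) auto
  then have "m \<in> set (tpath E a b)" unfolding r_def by simp
  moreover have "tdist E w c a = tdist E w c m + tdist E w m a" using sp by simp
  moreover have "tdist E w c b = tdist E w c m + tdist E w m b" using sq by simp
  ultimately show ?thesis by blast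
qed

lemma triangle:
  assumes "a \<in> V" "b \<in> V" "c \<in> V"
  shows "tdist E w a b \<le> tdist E w a c + tdist E w c b"
proof -
  obtain m where m: "m \<in> set (tpath E a b)" "tdist E w c a = tdist E w c m + tdist E w m a"
    "tdist E w c b = tdist E w c m + tdist E w m b" using median[OF assms] by blast
  have mV: "m \<in> V" using mem_V[OF assms(1,2) m(1)] .
  have "tdist E w a b = tdist E w a m + tdist E w m b" using add_path[OF assms(1,2) m(1)] .
  moreover have "tdist E w c m \<ge> 0" using tdist_nonneg assms mV by blast
  moreover have "tdist E w a m = tdist E w m a" "tdist E w a c = tdist E w c a"
    using tdist_sym assms mV by auto
  ultimately show ?thesis using m by linarith
qed

lemma key:
  assumes uV: "u \<in> V" and vV: "v \<in> V" and sV: "s \<in> V" and xV: "x \<in> V"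
    and h1: "tdist E w u s \<le> tdist E w u v" and h2: "tdist E w v s \<le> tdist E w u v"
  shows "tdist E w x s \<le> max (tdist E w x u) (tdist E w x v)"
proof -
  obtain c where c: "c \<in> set (tpath E u v)" "tdist E w x u = tdist E w x c + tdist E w c u"
    "tdist E w x v = tdist E w x c + tdist E w c v" using median[OF uV vV xV] by blast
  obtain c' where c': "c' \<in> set (tpath E u v)" "tdist E w s u = tdist E w s c' + tdist E w c' u"
    "tdist E w s v = tdist E w s c' + tdist E w c' v" using median[OF uV vV sV] by blast
  have cV: "c \<in> V" and c'V: "c' \<in> V" using mem_V[OF uV vV] c c' by auto
  note sym = tdist_sym[OF _ _]
  have uv: "tdist E w u v = tdist E w u c' + tdist E w c' v" using add_path[OF uV vV c'(1)] .
  have uv2: "tdist E w u v = tdist E w u c + tdist E w c v" using add_path[OF uV vV c(1)] .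
  have t1: "tdist E w x s \<le> tdist E w x c + tdist E w c s" using triangle[OF xV sV cV] .
  have t2: "tdist E w c s \<le> tdist E w c c' + tdist E w c' s" using triangle[OF cV sV c'V] .
  have S: "tdist E w s u = tdist E w u s" "tdist E w s v = tdist E w v s"
    "tdist E w s c' = tdist E w c' s" "tdist E w c u = tdist E w u c" "tdist E w c' u = tdist E w u c'"
    "tdist E w c' c = tdist E w c c'"
    using tdist_sym uV vV sV cV c'V by auto
  from order_path[OF uV vV c(1) c'(1)] show ?thesis
  proof
    assume o: "c \<in> set (tpath E u c') \<and> c' \<in> set (tpath E c v)"
    have a1: "tdist E w c v = tdist E w c c' + tdist E w c' v" using add_path[OF cV vV] o by blast
    have a2: "tdist E w u c' = tdist E w u c + tdist E w c c'" using add_path[OF uV c'V] o by blast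
    have "tdist E w x s \<le> tdist E w x v" using t1 t2 c'(2) S(1,3,5) uv h1 a1 c(3) by linarith
    then show ?thesis by simp
  next
    assume o: "c' \<in> set (tpath E u c) \<and> c \<in> set (tpath E c' v)"
    have a1: "tdist E w c' v = tdist E w c' c + tdist E w c v" using add_path[OF c'V vV] o by blast
    have a2: "tdist E w u c = tdist E w u c' + tdist E w c' c" using add_path[OF uV cV] o by blast
    have "tdist E w x s \<le> tdist E w x u" using t1 t2 c'(3) S(2,3,4,6) uv h2 a2 c(2) by linarith
    then show ?thesis by simp
  qed
qed

end


lemma chain_mono:
  fixes M :: "nat \<Rightarrow> real"
  assumes "\<And>i. 1 \<le> i \<Longrightarrow> i < n \<Longrightarrow> M (Suc i) \<le> M i" "1 \<le> i" "i \<le> j" "j \<le> n"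
  shows "M j \<le> M i"
  using assms(3,4)
proof (induction j)
  case 0 then show ?case using assms(2) by simp
next
  case (Suc j)
  show ?case
  proof (cases "i = Suc j")
    case False
    then have "i \<le> j" using Suc by simp
    then have "M j \<le> M i" using Suc by simp
    moreover have "M (Suc j) \<le> M j" using assms(1)[of j] Suc \<open>i \<le> j\<close> assms(2) by simp
    ultimately show ?thesis by simp
  qed simp
qed

lemma gk_edge_XY: "{X, Y} \<in> Gk_edges k"
  unfolding Gk_edges_def by simp

lemma gk_edge_U: "i \<in> {1..2*k-2} \<Longrightarrow> {X, U i} \<in> Gk_edges k \<longleftrightarrow> odd i"
proof
  assume "{X, U i} \<in> Gk_edges k"
  then obtain j where "j \<ge> 1" "U i = U (2*j-1)" unfolding Gk_edges_def by (auto simp: doubleton_eq_iff)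
  then show "odd i" by auto
next
  assume i: "i \<in> {1..2*k-2}" "odd i"
  then obtain j where j: "i = 2*j+1" using oddE by blast
  then have "1 \<le> Suc j \<and> Suc j \<le> k-1 \<and> {X, U i} = {X, U (2*Suc j-1)}" using i by auto
  then show "{X, U i} \<in> Gk_edges k" unfolding Gk_edges_def by blast
qed

lemma gk_edge_W: "i \<in> {1..2*k-2} \<Longrightarrow> {X, W i} \<in> Gk_edges k \<longleftrightarrow> odd i"
proof
  assume "{X, W i} \<in> Gk_edges k"
  then obtain j where "j \<ge> 1" "W i = W (2*j-1)" unfolding Gk_edges_def by (auto simp: doubleton_eq_iff)
  then show "odd i" by auto
next
  assume i: "i \<in> {1..2*k-2}" "odd i"
  then obtain j where j: "i = 2*j+1" using oddE by blast
  then have "1 \<le> Suc j \<and> Suc j \<le> k-1 \<and> {X, W i} = {X, W (2*Suc j-1)}" using i by auto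
  then show "{X, W i} \<in> Gk_edges k" unfolding Gk_edges_def by blast
qed

lemma seg_sub: "1 \<le> i \<Longrightarrow> seg k i \<subseteq> Gk_verts k"
  unfolding seg_def Gk_verts_def by auto

theorem lemma2:
  fixes k t :: nat and VG :: "'a set" and EG :: "'a set set"
    and V :: "'a set" and E :: "'a set set" and w :: "'a set \<Rightarrow> real"
    and I :: "nat \<Rightarrow> real set" and f :: "gk_vertex \<Rightarrow> 'a"
  assumes "k \<ge> 2"
    and "induced_embedding k VG EG f"
    and "is_multi_PCG_rep VG EG t V E w I"
    and "\<forall>t'. is_multi_PCG VG EG t' \<longrightarrow> t \<le> t'"
    and "\<forall>i\<in>{1..2*k-2}. \<forall>p. is_path E p \<and> set p \<subseteq> span_vertices E (f ` seg k i)
            \<longrightarrow> path_weight w p \<le> path_weight w (tpath E (f (U i)) (f (W i)))"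
  shows "t \<ge> k"
proof -
  from assms(3) have tree: "is_tree V E" and wp: "\<forall>e\<in>E. w e \<ge> 0" and vi: "valid_intervals I t"
    and VG: "VG = leaves V E" and EG: "EG = pcg_edges V E w I t"
    unfolding is_multi_PCG_rep_def by auto
  interpret tr V E w using tree wp by unfold_locales
  from assms(2) have inj: "inj_on f (Gk_verts k)" and sub: "f ` Gk_verts k \<subseteq> VG"
    and ind: "\<forall>a\<in>Gk_verts k. \<forall>b\<in>Gk_verts k. ({f a, f b} \<in> EG \<longleftrightarrow> {a,b} \<in> Gk_edges k)"
    unfolding induced_embedding_def by auto
  have leavesV: "leaves V E \<subseteq> V" unfolding leaves_def by auto
  have fV: "f a \<in> V" if "a \<in> Gk_verts k" for a using sub VG leavesV that by auto
  have fL: "f a \<in> leaves V E" if "a \<in> Gk_verts k" for a using sub VG that by auto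
  have XG: "X \<in> Gk_verts k" unfolding Gk_verts_def by simp
  define D where "D a = tdist E w (f X) (f a)" for a
  define inI where "inI r \<longleftrightarrow> (\<exists>i<t. r \<in> I i)" for r
  have adj: "inI (D a) \<longleftrightarrow> {X, a} \<in> Gk_edges k" if a: "a \<in> Gk_verts k" "a \<noteq> X" for a
  proof -
    have ne: "f X \<noteq> f a" using inj a XG by (metis inj_on_def)
    have "{f X, f a} \<in> EG \<longleftrightarrow> inI (D a)"
    proof
      assume "{f X, f a} \<in> EG"
      then obtain u v where uv: "{f X, f a} = {u, v}" "u \<in> leaves V E" "v \<in> leaves V E"
        "\<exists>i<t. tdist E w u v \<in> I i" unfolding EG pcg_edges_def by blast
      have "tdist E w u v = D a"
      proof (cases "u = f X")
        case True then show ?thesis using uv(1) ne unfolding D_def by (auto simp: doubleton_eq_iff)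
      next
        case False
        then have "u = f a" "v = f X" using uv(1) by (auto simp: doubleton_eq_iff)
        then show ?thesis unfolding D_def using tdist_sym fV a XG by metis
      qed
      then show "inI (D a)" using uv(4) unfolding inI_def by simp
    next
      assume "inI (D a)"
      then show "{f X, f a} \<in> EG" unfolding EG pcg_edges_def inI_def D_def
        using fL a XG ne by blast
    qed
    then show ?thesis using ind a XG by blast
  qed
  define M where "M i = max (D (U i)) (D (W i))" for i
  have bound: "D s \<le> M i" if i: "i \<in> {1..2*k-2}" and s: "s \<in> seg k i" for i s
  proof -
    have sg: "seg k i \<subseteq> Gk_verts k" using seg_sub i by auto
    have Ui: "U i \<in> seg k i" "W i \<in> seg k i" using i unfolding seg_def by auto
    have V1: "f (U i) \<in> V" "f (W i) \<in> V" "f s \<in> V" "f X \<in> V" using fV sg Ui s XG by auto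
    have h: "tdist E w (f b) (f s) \<le> tdist E w (f (U i)) (f (W i))" if b: "b \<in> seg k i" for b
    proof -
      have bV: "f b \<in> V" using fV sg b by auto
      have "is_path E (tpath E (f b) (f s))" using tpath_ok bV V1 by blast
      moreover have "set (tpath E (f b) (f s)) \<subseteq> span_vertices E (f ` seg k i)"
        unfolding span_vertices_def using b s by blast
      ultimately show ?thesis using assms(5) i unfolding tdist_def by blast
    qed
    show ?thesis using key[OF V1(1,2,3,4) h[OF Ui(1)] h[OF Ui(2)]] unfolding M_def D_def .
  qed
  have mono: "M (Suc i) \<le> M i" if "1 \<le> i" "i < 2*k-2" for i
  proof -
    have "U (Suc i) \<in> seg k i" "W (Suc i) \<in> seg k i" using that unfolding seg_def by auto
    then show ?thesis using bound[of i] that unfolding M_def by auto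
  qed
  have chain: "M j \<le> M i" if "1 \<le> i" "i \<le> j" "j \<le> 2*k-2" for i j
    using chain_mono[of "2*k-2" M, OF mono] that by blast
  have DY: "D Y \<le> M (2*k-2)"
    using bound[of "2*k-2" Y] assms(1) unfolding seg_def by auto
  have inM: "inI (M i) \<longleftrightarrow> odd i" if i: "i \<in> {1..2*k-2}" for i
  proof -
    have "U i \<in> Gk_verts k" "W i \<in> Gk_verts k" using i unfolding Gk_verts_def by auto
    then have "inI (D (U i)) \<longleftrightarrow> odd i" "inI (D (W i)) \<longleftrightarrow> odd i"
      using adj gk_edge_U[OF i] gk_edge_W[OF i] by auto
    moreover have "M i = D (U i) \<or> M i = D (W i)" unfolding M_def by linarith
    ultimately show ?thesis by metis
  qed
  have inY: "inI (D Y)" using adj[of Y] gk_edge_XY unfolding Gk_verts_def by auto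
  define a where "a j = (if j < k - 1 then M (2*j+1) else D Y)" for j
  have ina: "inI (a j)" if "j < k" for j
  proof (cases "j < k - 1")
    case True
    then have "2*j+1 \<in> {1..2*k-2}" by auto
    then show ?thesis using inM True unfolding a_def by simp
  next
    case False then show ?thesis using inY unfolding a_def by simp
  qed
  have "\<forall>j. \<exists>i. j < k \<longrightarrow> i < t \<and> a j \<in> I i" using ina unfolding inI_def by blast
  then obtain g where g: "\<And>j. j < k \<Longrightarrow> g j < t \<and> a j \<in> I (g j)" by metis
  have neq: "g j1 \<noteq> g j2" if j: "j1 < j2" "j2 < k" for j1 j2
  proof
    assume eq: "g j1 = g j2"
    have j1: "j1 < k - 1" using j by simp
    define b where "b = M (2*j1+2)"
    have "b \<le> a j1" unfolding a_def b_def using j1 chain[of "2*j1+1" "2*j1+2"] by simp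
    moreover have "a j2 \<le> b"
    proof (cases "j2 < k - 1")
      case True then show ?thesis unfolding a_def b_def using j chain[of "2*j1+2" "2*j2+1"] by simp
    next
      case False
      then have "a j2 = D Y" unfolding a_def by simp
      have "2*j1+2 \<le> 2*k-2" using j1 by simp
      then have "M (2*k-2) \<le> M (2*j1+2)" using chain[of "2*j1+2" "2*k-2"] by simp
      then show ?thesis unfolding b_def using DY \<open>a j2 = D Y\<close> by simp
    qed
    moreover have "a j1 \<in> I (g j1)" "a j2 \<in> I (g j1)" "g j1 < t" using g[of j1] g[of j2] j eq by auto
    ultimately have "b \<in> I (g j1)" using vi unfolding valid_intervals_def by blast
    then have "inI b" unfolding inI_def using \<open>g j1 < t\<close> by blast
    moreover have "2*j1+2 \<in> {1..2*k-2}" using j1 by auto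
    ultimately show False using inM unfolding b_def by fastforce
  qed
  have "inj_on g {..<k}"
  proof (rule inj_onI)
    fix x y assume "x \<in> {..<k}" "y \<in> {..<k}" "g x = g y"
    then show "x = y" using neq[of x y] neq[of y x] by (cases x y rule: linorder_cases) auto
  qed
  moreover have "g ` {..<k} \<subseteq> {..<t}" using g by auto
  ultimately have "card {..<k} \<le> card {..<t}" by (intro card_inj_on_le) auto
  then show ?thesis by simp
qed

end
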